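(* Let $Q,\tau$ be positive even integers and let $A$ and $Z$ be $0$-$1$ matrices of dimensions $\frac{Q}{2}\times\frac{\tau}{2}$, where $A$ is fixed and the entries of $Z$ are i.i.d. $0$-$1$ random variables with $\mathbb{E}(z_{ij})=\lambda$. If $\lambda<\frac{2}{\tau}$, then $$\mathbb{E}\big(w(I(A\wedge Z))\big)\ge\frac{\lambda}{2}\cdot w(A).$$
   Context: For a $0$-$1$ matrix $X$, $w(X)$ denotes the number of entries equal to $1$. $I(X)$ is the $0$-$1$ matrix of the same dimensions that keeps only the first nonzero entry in each row of $X$: $I(X)_{i,j}=1$ iff $X_{i,j}=1$ and $X_{i,\ell}=0$ for every $\ell<j$, and $I(X)_{i,j}=0$ otherwise. $A\wedge Z$ is the coordinate-wise conjunction (product) of $A$ and $Z$. *)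

theory Defs
  imports "HOL-Probability.Probability"
begin

text \<open>A 0-1 matrix of dimensions m x n is represented as a function
  nat \<times> nat \<Rightarrow> bool; only entries (i,j) with i < m, j < n are relevant.\<close>

definition weight :: "nat \<Rightarrow> nat \<Rightarrow> (nat \<times> nat \<Rightarrow> bool) \<Rightarrow> nat" where
  "weight m n X = card {(i, j). i < m \<and> j < n \<and> X (i, j)}"

definition first_ones :: "(nat \<times> nat \<Rightarrow> bool) \<Rightarrow> (nat \<times> nat \<Rightarrow> bool)" where
  "first_ones X = (\<lambda>(i, j). X (i, j) \<and> (\<forall>l<j. \<not> X (i, l)))"

definition mat_and :: "(nat \<times> nat \<Rightarrow> bool) \<Rightarrow> (nat \<times> nat \<Rightarrow> bool) \<Rightarrow> (nat \<times> nat \<Rightarrow> bool)" where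
  "mat_and A Z = (\<lambda>ij. A ij \<and> Z ij)"

definition random_matrix :: "nat \<Rightarrow> nat \<Rightarrow> real \<Rightarrow> (nat \<times> nat \<Rightarrow> bool) pmf" where
  "random_matrix m n p = Pi_pmf ({..<m} \<times> {..<n}) False (\<lambda>_. bernoulli_pmf p)"

end

theory Submission
  imports Defs
begin

lemma ineq_row:
  fixes l :: real and k :: nat
  assumes "0 \<le> l" "l \<le> 1" "l * k \<le> 1"
  shows "l / 2 * k \<le> 1 - (1 - l) ^ k"
proof -
  have b: "1 + real k * l \<le> (1 + l) ^ k"
    using Bernoulli_inequality[of l k] assms by simp
  have "(1 - l) ^ k * (1 + l) ^ k = (1 - l^2) ^ k"
    by (simp add: power_mult_distrib[symmetric] power2_eq_square algebra_simps)
  also have "\<dots> \<le> 1" using assms by (intro power_le_one) (auto simp: power2_eq_square mult_le_one)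
  finally have c: "(1 - l) ^ k * (1 + l) ^ k \<le> 1" .
  have p: "(1 - l) ^ k \<ge> 0" using assms by simp
  have "(1 - l) ^ k * (1 + real k * l) \<le> 1"
    using c b p by (meson mult_left_mono order_trans)
  have pos: "0 < 1 + real k * l" using assms by (simp add: add_pos_nonneg)
  have "(1 - l) ^ k \<le> 1 / (1 + real k * l)"
    using \<open>(1 - l) ^ k * (1 + real k * l) \<le> 1\<close> by (subst pos_le_divide_eq[OF pos])
  moreover have "l / 2 * k \<le> 1 - 1 / (1 + real k * l)"
  proof -
    have "l / 2 * k = (real k * l) / 2" by simp
    also have "\<dots> \<le> (real k * l) / (1 + real k * l)"
      using assms pos by (intro divide_left_mono) (auto simp: mult.commute)
    also have "\<dots> = 1 - 1 / (1 + real k * l)" using pos by (simp add: field_simps)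
    finally show ?thesis .
  qed
  ultimately show ?thesis by linarith
qed

lemma weight_rows:
  "weight m n X = (\<Sum>i<m. card {j. j < n \<and> X (i, j)})"
proof -
  have "{(i, j). i < m \<and> j < n \<and> X (i, j)} = Sigma {..<m} (\<lambda>i. {j. j < n \<and> X (i, j)})"
    by auto
  thus ?thesis unfolding weight_def by simp
qed

lemma card_first_row:
  "card {j. j < n \<and> first_ones (mat_and A Z) (i, j)} =
     (if \<exists>j<n. A (i, j) \<and> Z (i, j) then 1 else 0)"
proof (cases "\<exists>j<n. A (i, j) \<and> Z (i, j)")
  case True
  define j0 where "j0 = (LEAST j. A (i, j) \<and> Z (i, j))"
  from True obtain j where j: "j < n" "A (i, j) \<and> Z (i, j)" by blast
  have j0: "A (i, j0) \<and> Z (i, j0)" unfolding j0_def using LeastI[of "\<lambda>j. A (i, j) \<and> Z (i, j)" j] j by blast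
  have j0le: "j0 \<le> j" unfolding j0_def using Least_le[of "\<lambda>j. A (i, j) \<and> Z (i, j)" j] j by blast
  have "{j. j < n \<and> first_ones (mat_and A Z) (i, j)} = {j0}"
  proof (rule set_eqI, rule iffI)
    fix x assume "x \<in> {j. j < n \<and> first_ones (mat_and A Z) (i, j)}"
    hence x: "A (i, x) \<and> Z (i, x)" "\<forall>l<x. \<not> (A (i, l) \<and> Z (i, l))"
      by (simp_all add: first_ones_def mat_and_def)
    have "j0 \<le> x" unfolding j0_def using Least_le[of "\<lambda>j. A (i, j) \<and> Z (i, j)" x] x(1) by blast
    moreover have "\<not> j0 < x" using x(2) j0 by blast
    ultimately show "x \<in> {j0}" by simp
  next
    fix x assume "x \<in> {j0}"
    hence "x = j0" by simp
    moreover have "\<forall>l<j0. \<not> (A (i, l) \<and> Z (i, l))" unfolding j0_def using not_less_Least by blast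
    ultimately show "x \<in> {j. j < n \<and> first_ones (mat_and A Z) (i, j)}"
      using j0 j0le j by (simp add: first_ones_def mat_and_def)
  qed
  thus ?thesis using True by simp
next
  case False
  hence e: "{j. j < n \<and> first_ones (mat_and A Z) (i, j)} = {}"
    by (auto simp: first_ones_def mat_and_def)
  have c0: "card {j. j < n \<and> first_ones (mat_and A Z) (i, j)} = 0" by (simp only: e card.empty)
  show ?thesis by (simp only: c0 if_not_P[OF False])
qed

lemma row_prob:
  assumes "i < m" "0 \<le> lam" "lam \<le> 1"
  shows "measure_pmf.prob (random_matrix m n lam) {Z. \<forall>j<n. \<not> (A (i, j) \<and> Z (i, j))}
          = (1 - lam) ^ card {j. j < n \<and> A (i, j)}"
proof -
  define R where "R = {..<m} \<times> {..<n}"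
  define B where "B = (\<lambda>x::nat\<times>nat. if fst x = i \<and> A x then {False} else (UNIV :: bool set))"
  have fin: "finite R" unfolding R_def by simp
  have "{Z. \<forall>j<n. \<not> (A (i, j) \<and> Z (i, j))} = Pi R B"
    using assms(1) by (auto simp: R_def B_def Pi_def)
  hence "measure_pmf.prob (random_matrix m n lam) {Z. \<forall>j<n. \<not> (A (i, j) \<and> Z (i, j))}
       = (\<Prod>x\<in>R. measure_pmf.prob (bernoulli_pmf lam) (B x))"
    unfolding random_matrix_def R_def[symmetric] using measure_Pi_pmf_Pi[OF fin] by simp
  also have "\<dots> = (\<Prod>x\<in>R. if fst x = i \<and> A x then 1 - lam else 1)"
    by (intro prod.cong) (auto simp: B_def measure_pmf_single assms)
  also have "\<dots> = (1 - lam) ^ card (R \<inter> {x. fst x = i \<and> A x})"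
    by (simp add: prod.If_cases fin)
  also have "R \<inter> {x. fst x = i \<and> A x} = Pair i ` {j. j < n \<and> A (i, j)}"
    using assms(1) by (auto simp: R_def)
  also have "card \<dots> = card {j. j < n \<and> A (i, j)}"
    by (rule card_image) (auto simp: inj_on_def)
  finally show ?thesis .
qed

theorem lemma7p2:
  fixes Q \<tau> :: nat and A :: "nat \<times> nat \<Rightarrow> bool" and lam :: real
  assumes "Q > 0" "even Q" "\<tau> > 0" "even \<tau>"
    and "0 \<le> lam" "lam \<le> 1"
    and "lam < 2 / real \<tau>"
  shows "measure_pmf.expectation (random_matrix (Q div 2) (\<tau> div 2) lam)
           (\<lambda>Z. real (weight (Q div 2) (\<tau> div 2) (first_ones (mat_and A Z))))
         \<ge> lam / 2 * real (weight (Q div 2) (\<tau> div 2) A)"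
proof -
  define m where "m = Q div 2"
  define n where "n = \<tau> div 2"
  define M where "M = random_matrix m n lam"
  define E where "E = (\<lambda>i. {Z::nat\<times>nat\<Rightarrow>bool. \<exists>j<n. A (i, j) \<and> Z (i, j)})"
  define k where "k = (\<lambda>i. card {j. j < n \<and> A (i, j)})"
  have tau: "real \<tau> = 2 * real n" using assms(4) unfolding n_def by auto
  have lamn: "lam * n \<le> 1" using assms(7) tau assms(3) by (simp add: field_simps)
  have "(\<lambda>Z. real (weight m n (first_ones (mat_and A Z)))) = (\<lambda>Z. \<Sum>i<m. indicator (E i) Z)"
  proof (rule ext)
    fix Z
    have "weight m n (first_ones (mat_and A Z)) = (\<Sum>i<m. if \<exists>j<n. A (i, j) \<and> Z (i, j) then 1 else 0)"
      by (simp only: weight_rows card_first_row)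
    thus "real (weight m n (first_ones (mat_and A Z))) = (\<Sum>i<m. indicator (E i) Z)"
      by (simp only: of_nat_sum) (intro sum.cong refl, simp add: E_def indicator_def)
  qed
  hence "measure_pmf.expectation M (\<lambda>Z. real (weight m n (first_ones (mat_and A Z))))
        = (\<Sum>i<m. measure_pmf.expectation M (indicator (E i)))"
    apply (simp only:)
    by (subst Bochner_Integration.integral_sum)
       (auto intro!: integrable_indicator simp: measure_pmf.emeasure_finite less_top[symmetric])
  also have "\<dots> = (\<Sum>i<m. measure_pmf.prob M (E i))"
    by simp
  also have "\<dots> = (\<Sum>i<m. 1 - (1 - lam) ^ k i)"
  proof (intro sum.cong refl)
    fix i assume i: "i \<in> {..<m}"
    have "E i = UNIV - {Z. \<forall>j<n. \<not> (A (i, j) \<and> Z (i, j))}" by (auto simp: E_def)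
    hence "measure_pmf.prob M (E i) = 1 - measure_pmf.prob M {Z. \<forall>j<n. \<not> (A (i, j) \<and> Z (i, j))}"
      using measure_pmf.prob_compl[of "{Z. \<forall>j<n. \<not> (A (i, j) \<and> Z (i, j))}"] by simp
    thus "measure_pmf.prob M (E i) = 1 - (1 - lam) ^ k i"
      using row_prob[of i m lam n A] i assms(5,6) by (simp add: M_def k_def)
  qed
  also have "\<dots> \<ge> (\<Sum>i<m. lam / 2 * k i)"
  proof (intro sum_mono)
    fix i assume "i \<in> {..<m}"
    have "k i \<le> n" unfolding k_def
      using card_mono[of "{..<n}" "{j. j < n \<and> A (i, j)}"] by auto
    hence "lam * k i \<le> 1" using lamn assms(5)
      by (meson mult_left_mono of_nat_le_iff order_trans)
    thus "lam / 2 * k i \<le> 1 - (1 - lam) ^ k i" using ineq_row assms(5,6) by blast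
  qed
  finally show ?thesis
    by (simp add: m_def[symmetric] n_def[symmetric] M_def[symmetric] weight_rows k_def sum_distrib_left)
qed

end
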